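(* Let $X$ be a locally compact Hausdorff space and $(Y,\Delta)$ an $X$-simplicial complex satisfying hypotheses $(H_1)$ and $(H_2)$. Then every element of $\mathcal S=\bigcup_{\mu\in|\Delta|}S(\mu)$ is relatively compact in $|\Delta|$. Moreover, $|\Delta|$ is locally compact.
   Context: An $X$-simplicial complex is a pair $(Y,\Delta)$ with $Y$ locally compact Hausdorff, $\rho:Y\to X$ a local homeomorphism, and $\Delta$ a family of finite nonempty subsets of $Y$ of bounded cardinality, each contained in a fibre $\rho^{-1}(x)$, closed under taking nonempty subsets. $P(Y)$ is the space of positive Radon measures of total mass $1$ supported in a single fibre of $\rho$, with the weak-$*$ topology from $C_c(Y,\mathbb R)$, and $|\Delta|=\{\mu\in P(Y):\mathrm{supp}(\mu)\in\Delta\}$ with the subspace topology. $(H_1)$: for every compact $K\subseteq Y$, $C_K=\{y\in Y:\exists y'\in K,\{y,y'\}\in\Delta\}$ is compact. $(H_2)$: if nets $(y^{(i)}_\lambda)_\lambda$, $0\le i\le k$, converge to $y^{(i)}$ and $\{y^{(0)}_\lambda,\dots,y^{(k)}_\lambda\}\in\Delta$ for all $\lambda$, then $\{y^{(0)},\dots,y^{(k)}\}\in\Delta$. For $\mu=\sum_{i=0}^mc_i\delta_{y_i}\in|\Delta|$ with $c_i>0$, $S(\mu)$ is the set of all sets $W(\mu,(f_i)_i,\epsilon)=\{\nu\in|\Delta|:|\nu(f_i)-\mu(f_i)|<\epsilon\ \forall i\}$ where $f_0,\dots,f_m\in C_c(Y,[0,1])$ and $\epsilon>0$ satisfy: each $f_i$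 is supported in a relatively compact open neighbourhood $V_i$ of $y_i$ on which $\rho$ restricts to a homeomorphism onto an open subset of $X$, $f_i(y_i)>0$, and $0<\epsilon<\min_i c_if_i(y_i)$. *)

theory Defs
  imports "HOL-Analysis.Analysis"
begin

definition local_homeomorphism :: "'y topology \<Rightarrow> 'x topology \<Rightarrow> ('y \<Rightarrow> 'x) \<Rightarrow> bool" where
  "local_homeomorphism Y X \<rho> \<longleftrightarrow> continuous_map Y X \<rho> \<and>
     (\<forall>y\<in>topspace Y. \<exists>U. openin Y U \<and> y \<in> U \<and> openin X (\<rho> ` U) \<and>
        homeomorphic_map (subtopology Y U) (subtopology X (\<rho> ` U)) \<rho>)"

definition Cc :: "'y topology \<Rightarrow> ('y \<Rightarrow> real) set" where
  "Cc Y = {f. continuous_map Y euclideanreal f \<and>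
              compactin Y (Y closure_of {y \<in> topspace Y. f y \<noteq> 0})}"

definition fsupp :: "'y topology \<Rightarrow> ('y \<Rightarrow> real) \<Rightarrow> 'y set" where
  "fsupp Y f = Y closure_of {y \<in> topspace Y. f y \<noteq> 0}"

definition X_simplicial_complex ::
  "'x topology \<Rightarrow> 'y topology \<Rightarrow> ('y \<Rightarrow> 'x) \<Rightarrow> 'y set set \<Rightarrow> bool" where
  "X_simplicial_complex X Y \<rho> \<Delta> \<longleftrightarrow>
     locally_compact_space Y \<and> Hausdorff_space Y \<and> local_homeomorphism Y X \<rho> \<and>
     (\<forall>s\<in>\<Delta>. finite s \<and> s \<noteq> {} \<and> s \<subseteq> topspace Y \<and>
        (\<exists>x\<in>topspace X. s \<subseteq> {y \<in> topspace Y. \<rho> y = x})) \<and>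
     (\<exists>N::nat. \<forall>s\<in>\<Delta>. card s \<le> N) \<and>
     (\<forall>s\<in>\<Delta>. \<forall>t. t \<subseteq> s \<and> t \<noteq> {} \<longrightarrow> t \<in> \<Delta>)"

definition H1 :: "'y topology \<Rightarrow> 'y set set \<Rightarrow> bool" where
  "H1 Y \<Delta> \<longleftrightarrow> (\<forall>K. compactin Y K \<longrightarrow>
      compactin Y {y \<in> topspace Y. \<exists>y'\<in>K. {y, y'} \<in> \<Delta>})"

text \<open>(H2), with nets rendered as (proper) filters: the nets y^(i) are the coordinate
  functions t \<mapsto> t i on an index filter F over tuples.\<close>
definition H2 :: "'y topology \<Rightarrow> 'y set set \<Rightarrow> bool" where
  "H2 Y \<Delta> \<longleftrightarrow> (\<forall>(k::nat) (F :: (nat \<Rightarrow> 'y) filter) (z :: nat \<Rightarrow> 'y).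
      F \<noteq> bot \<and> (\<forall>i\<le>k. limitin Y (\<lambda>t. t i) (z i) F) \<and>
      eventually (\<lambda>t. t ` {0..k} \<in> \<Delta>) F \<longrightarrow> z ` {0..k} \<in> \<Delta>)"

text \<open>Finitely supported probability measures are represented by their weight function
  mu :: 'y => real (mu = sum of mu y * delta_y).\<close>
definition msupp :: "('y \<Rightarrow> real) \<Rightarrow> 'y set" where
  "msupp \<mu> = {y. \<mu> y \<noteq> 0}"

definition mint :: "('y \<Rightarrow> real) \<Rightarrow> ('y \<Rightarrow> real) \<Rightarrow> real" where
  "mint \<mu> f = (\<Sum>y\<in>msupp \<mu>. \<mu> y * f y)"

definition realization_set :: "'y set set \<Rightarrow> ('y \<Rightarrow> real) set" where
  "realization_set \<Delta> = {\<mu>. (\<forall>y. \<mu> y \<ge> 0) \<and> msupp \<mu> \<in> \<Delta> \<and> finite (msupp \<mu>) \<and>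
                             (\<Sum>y\<in>msupp \<mu>. \<mu> y) = 1}"

text \<open>|Delta| with the weak-* topology induced by C_c(Y,R), i.e. the initial topology
  of the evaluation maps mu \<mapsto> mu(f), f \<in> C_c(Y,R).\<close>
definition realization :: "'y topology \<Rightarrow> 'y set set \<Rightarrow> ('y \<Rightarrow> real) topology" where
  "realization Y \<Delta> = pullback_topology (realization_set \<Delta>)
      (\<lambda>\<mu>. \<lambda>f\<in>Cc Y. mint \<mu> f) (product_topology (\<lambda>_. euclideanreal) (Cc Y))"

text \<open>The basic sets W(mu,(f_i)_i,eps); f y is the function attached to support point y.\<close>
definition W_set :: "'y set set \<Rightarrow> ('y \<Rightarrow> real) \<Rightarrow> ('y \<Rightarrow> 'y \<Rightarrow> real) \<Rightarrow> real \<Rightarrow> ('y \<Rightarrow> real) set" where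
  "W_set \<Delta> \<mu> f \<epsilon> = {\<nu> \<in> realization_set \<Delta>. \<forall>y\<in>msupp \<mu>. \<bar>mint \<nu> (f y) - mint \<mu> (f y)\<bar> < \<epsilon>}"

definition S_family :: "'x topology \<Rightarrow> 'y topology \<Rightarrow> ('y \<Rightarrow> 'x) \<Rightarrow> 'y set set
    \<Rightarrow> ('y \<Rightarrow> real) \<Rightarrow> ('y \<Rightarrow> real) set set" where
  "S_family X Y \<rho> \<Delta> \<mu> = {W_set \<Delta> \<mu> f \<epsilon> | f \<epsilon>.
     (\<forall>y\<in>msupp \<mu>. f y \<in> Cc Y \<and> (\<forall>z. f y z \<in> {0..1}) \<and> f y y > 0 \<and>
        (\<exists>V. openin Y V \<and> y \<in> V \<and> compactin Y (Y closure_of V) \<and>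
             openin X (\<rho> ` V) \<and> homeomorphic_map (subtopology Y V) (subtopology X (\<rho> ` V)) \<rho> \<and>
             fsupp Y (f y) \<subseteq> V)) \<and>
     0 < \<epsilon> \<and> (\<forall>y\<in>msupp \<mu>. \<epsilon> < \<mu> y * f y y)}"

end

theory Submission
  imports Defs
begin


definition phi :: "nat \<Rightarrow> (nat \<Rightarrow> 'y) \<Rightarrow> (nat \<Rightarrow> real) \<Rightarrow> 'y \<Rightarrow> real" where
  "phi N y c = (\<lambda>z. \<Sum>i<N. if y i = z then c i else 0)"

lemma msupp_phi: "msupp (phi N y c) \<subseteq> y ` {i\<in>{..<N}. c i \<noteq> 0}"
proof
  fix z assume "z \<in> msupp (phi N y c)"
  then have "(\<Sum>i<N. if y i = z then c i else 0) \<noteq> 0" by (simp add: msupp_def phi_def)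
  then have "\<exists>i<N. (if y i = z then c i else 0) \<noteq> 0"
  proof (rule contrapos_np)
    assume "\<not> (\<exists>i<N. (if y i = z then c i else 0) \<noteq> 0)"
    then show "(\<Sum>i<N. if y i = z then c i else 0) = 0" by (intro sum.neutral) auto
  qed
  then obtain i where "i < N" "(if y i = z then c i else 0) \<noteq> 0" by blast
  then show "z \<in> y ` {i\<in>{..<N}. c i \<noteq> 0}" by (auto split: if_splits)
qed

lemma mint_phi: "mint (phi N y c) f = (\<Sum>i<N. c i * f (y i))"
proof -
  have fin: "finite (y ` {..<N})" by simp
  have sub: "msupp (phi N y c) \<subseteq> y ` {..<N}" using msupp_phi by fastforce
  have "mint (phi N y c) f = (\<Sum>z\<in>y ` {..<N}. phi N y c z * f z)"
    unfolding mint_def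
    by (rule sum.mono_neutral_left[OF fin sub]) (auto simp: msupp_def)
  also have "\<dots> = (\<Sum>z\<in>y ` {..<N}. \<Sum>i<N. if y i = z then c i * f (y i) else 0)"
    unfolding phi_def sum_distrib_right by (intro sum.cong refl) auto
  also have "\<dots> = (\<Sum>i<N. \<Sum>z\<in>y ` {..<N}. if y i = z then c i * f (y i) else 0)"
    by (rule sum.swap)
  also have "\<dots> = (\<Sum>i<N. c i * f (y i))"
    by (intro sum.cong refl) (simp add: sum.delta)
  finally show ?thesis .
qed

lemma topspace_realization: "topspace (realization Y \<Delta>) = realization_set \<Delta>"
  unfolding realization_def topspace_pullback_topology by auto

lemma cont_eval:
  assumes "g \<in> Cc Y"
  shows "continuous_map (realization Y \<Delta>) euclideanreal (\<lambda>\<nu>. mint \<nu> g)"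
proof -
  have "continuous_map (realization Y \<Delta>) euclideanreal ((\<lambda>x. x g) \<circ> (\<lambda>\<mu>. \<lambda>f\<in>Cc Y. mint \<mu> f))"
    unfolding realization_def
    by (rule continuous_map_pullback, rule continuous_map_product_projection[OF assms])
  moreover have "((\<lambda>x. x g) \<circ> (\<lambda>\<mu>. \<lambda>f\<in>Cc Y. mint \<mu> f)) = (\<lambda>\<nu>. mint \<nu> g)"
    using assms by auto
  ultimately show ?thesis by simp
qed

lemma A_closed:
  fixes N :: nat
  assumes h2: "H2 Y \<Delta>" and J: "J \<subseteq> {..<N}" "J \<noteq> {}"
  shows "closedin (product_topology (\<lambda>_. Y) {..<N}) {y \<in> topspace (product_topology (\<lambda>_. Y) {..<N}). y ` J \<in> \<Delta>}"
    (is "closedin ?P ?S")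
proof -
  have "openin ?P (topspace ?P - ?S)"
  proof (subst openin_subopen, intro ballI)
    fix t assume t: "t \<in> topspace ?P - ?S"
    show "\<exists>T. openin ?P T \<and> t \<in> T \<and> T \<subseteq> topspace ?P - ?S"
    proof (rule ccontr)
      assume nex: "\<not> ?thesis"
      define F0 where "F0 = inf (nhdsin ?P t) (principal ?S)"
      have F0: "F0 \<noteq> bot"
      proof
        assume "F0 = bot"
        then have "eventually (\<lambda>x. False) F0" by simp
        then have "eventually (\<lambda>x. x \<in> ?S \<longrightarrow> False) (nhdsin ?P t)"
          unfolding F0_def eventually_inf_principal .
        then obtain T where T: "openin ?P T" "t \<in> T" "\<forall>x\<in>T. x \<notin> ?S"
          using t unfolding eventually_nhdsin by auto
        then have "T \<subseteq> topspace ?P - ?S" using openin_subset by blast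
        with T nex show False by blast
      qed
      have finJ: "finite J" using J(1) by (rule finite_subset) auto
      obtain h where h: "bij_betw h {0..<card J} J" using ex_bij_betw_nat_finite[OF finJ] by blast
      define k where "k = card J - 1"
      have cJ: "card J \<ge> 1" using J finJ by (simp add: Suc_leI card_gt_0_iff)
      have k: "{0..k} = {0..<card J}" using cJ unfolding k_def by auto
      have hk: "h ` {0..k} = J" using h k by (simp add: bij_betw_def)
      define F where "F = filtermap (\<lambda>x. \<lambda>j. x (h j)) F0"
      have "F \<noteq> bot" unfolding F_def filtermap_bot_iff using F0 .
      moreover have "\<forall>i\<le>k. limitin Y (\<lambda>s. s i) ((\<lambda>j. t (h j)) i) F"
      proof (intro allI impI)
        fix i assume "i \<le> k"
        then have "h i \<in> J" using hk by auto
        then have hi: "h i \<in> {..<N}" using J(1) by blast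
        have tY: "t (h i) \<in> topspace Y" using t hi by auto
        show "limitin Y (\<lambda>s. s i) ((\<lambda>j. t (h j)) i) F"
          unfolding limitin_def
        proof (intro conjI allI impI)
          show "(\<lambda>j. t (h j)) i \<in> topspace Y" using tY by simp
          fix U assume U: "openin Y U \<and> (\<lambda>j. t (h j)) i \<in> U"
          have "openin ?P {x \<in> topspace ?P. x (h i) \<in> U}"
            by (rule openin_continuous_map_preimage[OF continuous_map_product_projection[OF hi]]) (use U in simp)
          then have "eventually (\<lambda>x. x (h i) \<in> U) (nhdsin ?P t)"
            unfolding eventually_nhdsin using U t
            by (intro disjI2 exI[of _ "{x \<in> topspace ?P. x (h i) \<in> U}"]) auto
          then have "eventually (\<lambda>x. x (h i) \<in> U) F0"
            unfolding F0_def eventually_inf_principal by (auto elim: eventually_mono)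
          then show "eventually (\<lambda>x. x i \<in> U) F"
            unfolding F_def eventually_filtermap by simp
        qed
      qed
      moreover have "eventually (\<lambda>s. s ` {0..k} \<in> \<Delta>) F"
      proof -
        have "eventually (\<lambda>x. x \<in> ?S) F0"
          unfolding F0_def eventually_inf_principal by simp
        then have "eventually (\<lambda>x. (\<lambda>j. x (h j)) ` {0..k} \<in> \<Delta>) F0"
        proof (rule eventually_mono)
          fix x assume "x \<in> ?S"
          moreover have "(\<lambda>j. x (h j)) ` {0..k} = x ` J" using hk by auto
          ultimately show "(\<lambda>j. x (h j)) ` {0..k} \<in> \<Delta>" by simp
        qed
        then show ?thesis unfolding F_def eventually_filtermap .
      qed
      ultimately have "(\<lambda>j. t (h j)) ` {0..k} \<in> \<Delta>"
        by (intro h2[unfolded H2_def, rule_format, where k=k and F=F and z="\<lambda>j. t (h j)"] conjI)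
      moreover have "(\<lambda>j. t (h j)) ` {0..k} = t ` J" using hk by auto
      ultimately show False using t by auto
    qed
  qed
  then show ?thesis unfolding closedin_def by blast
qed



lemma phi_in_rs:
  assumes dsub: "\<forall>s\<in>\<Delta>. \<forall>t. t \<subseteq> s \<and> t \<noteq> {} \<longrightarrow> t \<in> \<Delta>"
    and J: "J \<subseteq> {..<N}" and yJ: "y ` J \<in> \<Delta>"
    and c01: "\<forall>i<N. c i \<in> {0..1}" and c1: "(\<Sum>i<N. c i) = 1"
    and c0: "(\<Sum>i\<in>{..<N} - J. c i) = 0"
  shows "phi N y c \<in> realization_set \<Delta>" "msupp (phi N y c) \<subseteq> y ` J"
proof -
  have cz: "\<forall>i\<in>{..<N} - J. c i = 0"
    using c0 c01 by (subst (asm) sum_nonneg_eq_0_iff) auto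
  show sub: "msupp (phi N y c) \<subseteq> y ` J"
    using msupp_phi[of N y c] cz by blast
  have fin: "finite (msupp (phi N y c))"
    using sub J by (meson finite_imageI finite_lessThan finite_subset)
  have s1: "(\<Sum>z\<in>msupp (phi N y c). phi N y c z) = 1"
    using mint_phi[of N y c "\<lambda>_. 1"] c1 by (simp add: mint_def)
  then have ne: "msupp (phi N y c) \<noteq> {}" by auto
  have "msupp (phi N y c) \<in> \<Delta>" by (rule dsub[rule_format, OF yJ]) (use sub ne in auto)
  moreover have "\<forall>z. phi N y c z \<ge> 0"
    unfolding phi_def using c01 by (auto intro!: sum_nonneg)
  ultimately show "phi N y c \<in> realization_set \<Delta>"
    unfolding realization_set_def using fin s1 by auto
qed

lemma K_compact:
  fixes Y :: "'y topology"
  assumes sc: "X_simplicial_complex X Y \<rho> \<Delta>" and h2: "H2 Y \<Delta>" and C: "compactin Y C"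
  shows "compactin (realization Y \<Delta>) {\<nu> \<in> realization_set \<Delta>. msupp \<nu> \<subseteq> C}"
proof -
  obtain N where N: "\<forall>s\<in>\<Delta>. card s \<le> N" using sc unfolding X_simplicial_complex_def by blast
  have dsub: "\<forall>s\<in>\<Delta>. \<forall>t. t \<subseteq> s \<and> t \<noteq> {} \<longrightarrow> t \<in> \<Delta>"
    using sc unfolding X_simplicial_complex_def by blast
  have CY: "C \<subseteq> topspace Y" using C compactin_subset_topspace by blast
  define PY where "PY = product_topology (\<lambda>_::nat. Y) {..<N}"
  define PR where "PR = product_topology (\<lambda>_::nat. euclideanreal) {..<N}"
  define PP where "PP = prod_topology PY PR"
  define Jset where "Jset = {J. J \<subseteq> {..<N} \<and> J \<noteq> {}}"
  define AJ where "AJ J = PiE {..<N} (\<lambda>_. C) \<inter> {y\<in>topspace PY. y ` J \<in> \<Delta>}" for J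
  define BJ where "BJ J = PiE {..<N} (\<lambda>_. {0..1::real}) \<inter> {c \<in> topspace PR. (\<Sum>i<N. c i) = 1}
        \<inter> {c \<in> topspace PR. (\<Sum>i\<in>{..<N} - J. c i) = 0}" for J
  define D where "D = (\<Union>J\<in>Jset. AJ J \<times> BJ J)"
  define \<Phi> where "\<Phi> = (\<lambda>p::(nat \<Rightarrow> 'y) \<times> (nat \<Rightarrow> real). phi N (fst p) (snd p))"
  have cD: "compactin PP D"
    unfolding D_def
  proof (rule compactin_Union)
    show "finite ((\<lambda>J. AJ J \<times> BJ J) ` Jset)" unfolding Jset_def by auto
    fix S assume "S \<in> (\<lambda>J. AJ J \<times> BJ J) ` Jset"
    then obtain J where J: "J \<in> Jset" "S = AJ J \<times> BJ J" by blast
    have "compactin PY (AJ J)"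
      unfolding AJ_def PY_def
      by (rule compact_Int_closedin, simp add: compactin_PiE C,
          rule A_closed[OF h2], use J Jset_def in auto)
    moreover have "compactin PR (BJ J)"
      unfolding BJ_def Int_assoc[symmetric]
    proof (intro compact_Int_closedin)
      show "compactin PR (PiE {..<N} (\<lambda>_. {0..1::real}))"
        unfolding PR_def by (simp add: compactin_PiE)
      have cs: "continuous_map PR euclideanreal (\<lambda>c. \<Sum>i\<in>I. c i)" if "I \<subseteq> {..<N}" for I
        unfolding PR_def
        by (intro continuous_map_sum, meson finite_lessThan finite_subset that,
            rule continuous_map_product_projection, use that in auto)
      show "closedin PR {c \<in> topspace PR. (\<Sum>i<N. c i) = 1}"
        using closedin_continuous_map_preimage[OF cs[of "{..<N}"], of "{1}"] by simp
      show "closedin PR {c \<in> topspace PR. (\<Sum>i\<in>{..<N} - J. c i) = 0}"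
        using closedin_continuous_map_preimage[OF cs[of "{..<N} - J"], of "{0}"] by simp
    qed
    ultimately show "compactin PP S" unfolding PP_def J(2) by (simp add: compactin_Times)
  qed
  have inrs: "\<Phi> p \<in> realization_set \<Delta> \<and> msupp (\<Phi> p) \<subseteq> C" if "p \<in> D" for p
  proof -
    obtain J y c where p: "p = (y, c)" "J \<in> Jset" "y \<in> AJ J" "c \<in> BJ J"
      using \<open>p \<in> D\<close> unfolding D_def by auto
    have J: "J \<subseteq> {..<N}" using p Jset_def by auto
    have yJ: "y ` J \<in> \<Delta>" and c01: "\<forall>i<N. c i \<in> {0..1}" and c1: "(\<Sum>i<N. c i) = 1"
      and c0: "(\<Sum>i\<in>{..<N} - J. c i) = 0"
      using p unfolding AJ_def BJ_def by (auto simp: PiE_def Pi_def)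
    have "phi N y c \<in> realization_set \<Delta>" "msupp (phi N y c) \<subseteq> y ` J"
      using phi_in_rs[OF dsub J yJ c01 c1 c0] by auto
    moreover have "y ` J \<subseteq> C" using p J AJ_def by auto
    ultimately show ?thesis using p \<Phi>_def by auto
  qed
  have cont: "continuous_map (subtopology PP D) (realization Y \<Delta>) \<Phi>"
    unfolding realization_def
  proof (rule continuous_map_pullback')
    show "topspace (subtopology PP D) \<subseteq> \<Phi> -` realization_set \<Delta>" using inrs by auto
    have "continuous_map PP (product_topology (\<lambda>_. euclideanreal) (Cc Y))
            ((\<lambda>\<mu>. \<lambda>f\<in>Cc Y. mint \<mu> f) \<circ> \<Phi>)"
      unfolding continuous_map_componentwise
    proof (intro conjI ballI)
      show "((\<lambda>\<mu>. \<lambda>f\<in>Cc Y. mint \<mu> f) \<circ> \<Phi>) ` topspace PP \<subseteq> extensional (Cc Y)" by auto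
      fix g assume g: "g \<in> Cc Y"
      have gc: "continuous_map Y euclideanreal g" using g Cc_def by auto
      have eq: "(\<lambda>x. ((\<lambda>\<mu>. \<lambda>f\<in>Cc Y. mint \<mu> f) \<circ> \<Phi>) x g) = (\<lambda>p. \<Sum>i<N. snd p i * g (fst p i))"
        using g by (auto simp: \<Phi>_def mint_phi)
      have c1: "continuous_map PP euclideanreal (\<lambda>p. snd p i)" if "i < N" for i
      proof -
        have "continuous_map PR euclideanreal (\<lambda>x. x i)"
          unfolding PR_def by (rule continuous_map_product_projection) (use that in auto)
        from continuous_map_compose[OF continuous_map_snd this, of PY]
        show ?thesis unfolding PP_def by (simp add: o_def)
      qed
      have c2: "continuous_map PP euclideanreal (\<lambda>p. g (fst p i))" if "i < N" for i
      proof -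
        have "continuous_map PY Y (\<lambda>x. x i)"
          unfolding PY_def by (rule continuous_map_product_projection) (use that in auto)
        from continuous_map_compose[OF continuous_map_compose[OF continuous_map_fst this, of PR] gc]
        show ?thesis unfolding PP_def by (simp add: o_def)
      qed
      show "continuous_map PP euclideanreal (\<lambda>x. ((\<lambda>\<mu>. \<lambda>f\<in>Cc Y. mint \<mu> f) \<circ> \<Phi>) x g)"
        unfolding eq
        by (intro continuous_map_sum finite_lessThan continuous_map_real_mult c1 c2) auto
    qed
    then show "continuous_map (subtopology PP D) (product_topology (\<lambda>_. euclideanreal) (Cc Y))
            ((\<lambda>\<mu>. \<lambda>f\<in>Cc Y. mint \<mu> f) \<circ> \<Phi>)"
      by (rule continuous_map_from_subtopology)
  qed
  have "compactin (realization Y \<Delta>) (\<Phi> ` D)"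
    by (rule image_compactin[OF _ cont]) (simp add: compactin_subtopology cD)
  moreover have "\<Phi> ` D = {\<nu> \<in> realization_set \<Delta>. msupp \<nu> \<subseteq> C}"
  proof
    show "\<Phi> ` D \<subseteq> {\<nu> \<in> realization_set \<Delta>. msupp \<nu> \<subseteq> C}" using inrs by auto
    show "{\<nu> \<in> realization_set \<Delta>. msupp \<nu> \<subseteq> C} \<subseteq> \<Phi> ` D"
    proof
      fix \<nu> assume \<nu>: "\<nu> \<in> {\<nu> \<in> realization_set \<Delta>. msupp \<nu> \<subseteq> C}"
      define M where "M = msupp \<nu>"
      define m where "m = card M"
      have MD: "M \<in> \<Delta>" and finM: "finite M" and pos: "\<forall>z. \<nu> z \<ge> 0" and s1: "(\<Sum>z\<in>M. \<nu> z) = 1"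
        and MC: "M \<subseteq> C"
        using \<nu> unfolding realization_set_def M_def by auto
      have Mne: "M \<noteq> {}" using s1 by auto
      have mN: "m \<le> N" using N MD m_def by auto
      have m1: "m \<ge> 1" using Mne finM m_def by (simp add: Suc_leI card_gt_0_iff)
      obtain e where e: "bij_betw e {..<m} M"
        using ex_bij_betw_nat_finite[OF finM] unfolding m_def atLeast0LessThan by blast
      have eM: "e i \<in> M" if "i < m" for i using e that bij_betwE by blast
      define y where "y = (\<lambda>i. if i < N then (if i < m then e i else e 0) else undefined)"
      define c where "c = (\<lambda>i. if i < N then (if i < m then \<nu> (e i) else 0) else (undefined::real))"
      have le1: "\<nu> z \<le> 1" if "z \<in> M" for z
        using member_le_sum[of z M \<nu>] that finM pos s1 by auto
      have sumc: "(\<Sum>i<N. g i * c i) = (\<Sum>i<m. g i * \<nu> (e i))" for g :: "nat \<Rightarrow> real"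
      proof -
        have "(\<Sum>i<N. g i * c i) = (\<Sum>i<m. g i * c i)"
          by (rule sum.mono_neutral_right) (use mN in \<open>auto simp: c_def\<close>)
        also have "\<dots> = (\<Sum>i<m. g i * \<nu> (e i))"
          by (rule sum.cong) (use mN in \<open>auto simp: c_def\<close>)
        finally show ?thesis .
      qed
      have phieq: "phi N y c = \<nu>"
      proof
        fix z
        have "phi N y c z = (\<Sum>i<N. (if y i = z then 1 else 0) * c i)"
          unfolding phi_def by (intro sum.cong) auto
        also have "\<dots> = (\<Sum>i<m. (if y i = z then 1 else 0) * \<nu> (e i))" by (rule sumc)
        also have "\<dots> = (\<Sum>i<m. (\<lambda>w. if w = z then \<nu> w else 0) (e i))"
          by (rule sum.cong) (use mN in \<open>auto simp: y_def\<close>)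
        also have "\<dots> = (\<Sum>w\<in>M. if w = z then \<nu> w else 0)"
          by (rule sum.reindex_bij_betw[OF e])
        also have "\<dots> = \<nu> z"
          using finM by (simp add: sum.delta M_def msupp_def)
        finally show "phi N y c z = \<nu> z" .
      qed
      have "(y, c) \<in> D"
        unfolding D_def
      proof (rule UN_I[of "{..<m}"])
        have "0 \<in> {..<m}" using m1 by simp
        then have mne: "{..<m} \<noteq> {}" by auto
        show "{..<m} \<in> Jset" using mne mN unfolding Jset_def by auto
        have yim: "y ` {..<m} = M"
        proof -
          have "y ` {..<m} = e ` {..<m}" using mN by (auto simp: y_def)
          then show ?thesis using bij_betw_imp_surj_on[OF e] by simp
        qed
        have eC: "e i \<in> C" if "i < m" for i using eM[OF that] MC by blast
        have m0: "0 < m" using m1 by simp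
        have yC: "y \<in> PiE {..<N} (\<lambda>_. C)"
          by (auto simp: y_def PiE_def extensional_def eC m0)
        have yT: "y \<in> topspace PY"
          using PiE_mono[of "{..<N}" "\<lambda>_. C" "\<lambda>_. topspace Y"] CY yC unfolding PY_def by auto
        have "y \<in> AJ {..<m}"
          unfolding AJ_def using yC yT yim MD by simp
        moreover have "c \<in> BJ {..<m}"
        proof -
          have "(\<Sum>i<N. c i) = 1" using sumc[of "\<lambda>_. 1"] s1
            sum.reindex_bij_betw[OF e, of \<nu>] by simp
          moreover have "(\<Sum>i\<in>{..<N} - {..<m}. c i) = 0" by (auto simp: c_def)
          moreover have "c \<in> PiE {..<N} (\<lambda>_. {0..1::real})"
            using eM pos le1 by (auto simp: c_def PiE_def extensional_def)
          ultimately show ?thesis unfolding BJ_def PR_def by (auto simp: PiE_def extensional_def)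
        qed
        ultimately show "(y, c) \<in> AJ {..<m} \<times> BJ {..<m}" by simp
      qed
      then show "\<nu> \<in> \<Phi> ` D" using phieq unfolding \<Phi>_def by force
    qed
  qed
  ultimately show ?thesis by simp
qed



lemma Q_compact:
  fixes Y :: "'y topology"
  assumes sc: "X_simplicial_complex X Y \<rho> \<Delta>" and h1: "H1 Y \<Delta>" and h2: "H2 Y \<Delta>"
    and g: "g \<in> Cc Y" and a: "a > 0"
  shows "compactin (realization Y \<Delta>) {\<nu> \<in> realization_set \<Delta>. mint \<nu> g \<ge> a}"
proof -
  have dsub: "\<forall>s\<in>\<Delta>. \<forall>t. t \<subseteq> s \<and> t \<noteq> {} \<longrightarrow> t \<in> \<Delta>"
    and dY: "\<forall>s\<in>\<Delta>. s \<subseteq> topspace Y"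
    using sc unfolding X_simplicial_complex_def by blast+
  define K where "K = fsupp Y g"
  have cK: "compactin Y K" using g unfolding K_def Cc_def fsupp_def by auto
  define C where "C = {y \<in> topspace Y. \<exists>y'\<in>K. {y, y'} \<in> \<Delta>}"
  have cC: "compactin Y C" using h1 cK unfolding H1_def C_def by blast
  have sub: "{\<nu> \<in> realization_set \<Delta>. mint \<nu> g \<ge> a} \<subseteq> {\<nu> \<in> realization_set \<Delta>. msupp \<nu> \<subseteq> C}"
  proof
    fix \<nu> assume \<nu>0: "\<nu> \<in> {\<nu> \<in> realization_set \<Delta>. mint \<nu> g \<ge> a}"
    then have \<nu>: "\<nu> \<in> realization_set \<Delta>" "a \<le> mint \<nu> g" by auto
    have MD: "msupp \<nu> \<in> \<Delta>" using \<nu> realization_set_def by blast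
    have "mint \<nu> g \<noteq> 0" using \<nu> a by auto
    then have "\<exists>y'\<in>msupp \<nu>. g y' \<noteq> 0"
    proof (rule contrapos_np)
      assume "\<not> (\<exists>y'\<in>msupp \<nu>. g y' \<noteq> 0)"
      then show "mint \<nu> g = 0" unfolding mint_def by (intro sum.neutral) auto
    qed
    then obtain y' where y': "y' \<in> msupp \<nu>" "g y' \<noteq> 0" by blast
    have "y' \<in> topspace Y" using y' MD dY by blast
    then have y'K: "y' \<in> K" unfolding K_def fsupp_def using y' closure_of_subset[of "{y \<in> topspace Y. g y \<noteq> 0}" Y] by auto
    have "msupp \<nu> \<subseteq> C"
    proof
      fix z assume z: "z \<in> msupp \<nu>"
      have "{z, y'} \<in> \<Delta>" by (rule dsub[rule_format, OF MD]) (use z y' in auto)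
      moreover have "z \<in> topspace Y" using z MD dY by blast
      ultimately show "z \<in> C" unfolding C_def using y'K by blast
    qed
    then show "\<nu> \<in> {\<nu> \<in> realization_set \<Delta>. msupp \<nu> \<subseteq> C}" using \<nu> by simp
  qed
  have cl: "closedin (realization Y \<Delta>) {\<nu> \<in> realization_set \<Delta>. mint \<nu> g \<ge> a}"
    using closedin_continuous_map_preimage[OF cont_eval[OF g, of \<Delta>], of "{a..}"]
    by (simp add: topspace_realization)
  show ?thesis
    by (rule closed_compactin[OF K_compact[OF sc h2 cC] sub cl])
qed

lemma mint_ge:
  assumes "\<mu> \<in> realization_set \<Delta>" "y0 \<in> msupp \<mu>" "\<forall>z\<in>msupp \<mu>. g z \<ge> 0"
  shows "mint \<mu> g \<ge> \<mu> y0 * g y0"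
  unfolding mint_def
  by (rule member_le_sum) (use assms in \<open>auto simp: realization_set_def\<close>)

lemma bump:
  assumes lc: "locally_compact_space Y" and hs: "Hausdorff_space Y" and y0: "y0 \<in> topspace Y"
  obtains g where "g \<in> Cc Y" "\<forall>z\<in>topspace Y. g z \<in> {0..1}" "g y0 = 1"
proof -
  obtain U K where UK: "openin Y U" "compactin Y K" "y0 \<in> U" "U \<subseteq> K"
    using lc y0 unfolding locally_compact_space_def by blast
  have cr: "completely_regular_space Y"
    using locally_compact_regular_imp_completely_regular_space lc hs by blast
  have "closedin Y (topspace Y - U)" using UK by blast
  then obtain h :: "'a \<Rightarrow> real" where h: "continuous_map Y (top_of_set {0..1}) h" "h y0 = 0"
      "h ` (topspace Y - U) \<subseteq> {1}"
    using cr y0 UK unfolding completely_regular_space_def by (metis Diff_iff)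
  have hh: "continuous_map Y euclideanreal h \<and> h ` topspace Y \<subseteq> {0..1}"
    using h(1) by (simp add: continuous_map_in_subtopology image_subset_iff_funcset)
  have hc: "continuous_map Y euclideanreal h" and h01: "\<forall>z\<in>topspace Y. h z \<in> {0..1}"
    using hh by auto
  define g where "g = (\<lambda>z. 1 - h z)"
  have gc: "continuous_map Y euclideanreal g"
    unfolding g_def by (intro continuous_intros hc)
  have "{y \<in> topspace Y. g y \<noteq> 0} \<subseteq> K" using h(3) UK unfolding g_def by force
  then have "Y closure_of {y \<in> topspace Y. g y \<noteq> 0} \<subseteq> K"
    using closure_of_minimal compactin_imp_closedin[OF hs UK(2)] by blast
  then have "compactin Y (Y closure_of {y \<in> topspace Y. g y \<noteq> 0})"
    by (rule closed_compactin[OF UK(2)]) (rule closedin_closure_of)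
  then have "g \<in> Cc Y" using gc unfolding Cc_def by simp
  moreover have "\<forall>z\<in>topspace Y. g z \<in> {0..1}" using h01 unfolding g_def by auto
  moreover have "g y0 = 1" using h unfolding g_def by simp
  ultimately show ?thesis using that by blast
qed

theorem proposition3p19:
  fixes X :: "'x topology" and Y :: "'y topology" and \<rho> :: "'y \<Rightarrow> 'x" and \<Delta> :: "'y set set"
  assumes "locally_compact_space X" and "Hausdorff_space X"
    and "X_simplicial_complex X Y \<rho> \<Delta>"
    and "H1 Y \<Delta>" and "H2 Y \<Delta>"
  shows "(\<forall>\<mu>\<in>realization_set \<Delta>. \<forall>W\<in>S_family X Y \<rho> \<Delta> \<mu>.
           compactin (realization Y \<Delta>) (realization Y \<Delta> closure_of W)) \<and>
         locally_compact_space (realization Y \<Delta>)"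
proof
  note sc = assms(3) and h1 = assms(4) and h2 = assms(5)
  have dY: "\<forall>s\<in>\<Delta>. s \<subseteq> topspace Y" and ne: "\<forall>s\<in>\<Delta>. s \<noteq> {}"
    and lcY: "locally_compact_space Y" and hsY: "Hausdorff_space Y"
    using sc unfolding X_simplicial_complex_def by blast+
  show "\<forall>\<mu>\<in>realization_set \<Delta>. \<forall>W\<in>S_family X Y \<rho> \<Delta> \<mu>.
           compactin (realization Y \<Delta>) (realization Y \<Delta> closure_of W)"
  proof (intro ballI)
    fix \<mu> W assume \<mu>: "\<mu> \<in> realization_set \<Delta>" and W: "W \<in> S_family X Y \<rho> \<Delta> \<mu>"
    obtain f \<epsilon> where W': "W = W_set \<Delta> \<mu> f \<epsilon>"
      and fp: "\<forall>y\<in>msupp \<mu>. f y \<in> Cc Y \<and> (\<forall>z. f y z \<in> {0..1}) \<and> f y y > 0"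
      and ep: "0 < \<epsilon>" "\<forall>y\<in>msupp \<mu>. \<epsilon> < \<mu> y * f y y"
      using W unfolding S_family_def by blast
    have "msupp \<mu> \<noteq> {}" using \<mu> ne realization_set_def by blast
    then obtain y0 where y0: "y0 \<in> msupp \<mu>" by blast
    define g where "g = f y0"
    have g: "g \<in> Cc Y" "\<forall>z. g z \<ge> 0" using fp y0 g_def by auto
    have "mint \<mu> g \<ge> \<mu> y0 * g y0" using mint_ge[OF \<mu> y0] g by auto
    then have a: "mint \<mu> g - \<epsilon> > 0" using ep y0 g_def by auto
    define Q where "Q = {\<nu> \<in> realization_set \<Delta>. mint \<nu> g \<ge> mint \<mu> g - \<epsilon>}"
    have cQ: "compactin (realization Y \<Delta>) Q"
      unfolding Q_def by (rule Q_compact[OF sc h1 h2 g(1) a])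
    have clQ: "closedin (realization Y \<Delta>) Q"
      using closedin_continuous_map_preimage[OF cont_eval[OF g(1), of \<Delta>], of "{mint \<mu> g - \<epsilon>..}"]
      by (simp add: topspace_realization Q_def)
    have "W \<subseteq> Q"
    proof
      fix \<nu> assume "\<nu> \<in> W"
      then have "\<nu> \<in> realization_set \<Delta>" "\<bar>mint \<nu> g - mint \<mu> g\<bar> < \<epsilon>"
        using W' y0 unfolding W_set_def g_def by auto
      then show "\<nu> \<in> Q" unfolding Q_def by auto
    qed
    then have "realization Y \<Delta> closure_of W \<subseteq> Q" using closure_of_minimal clQ by blast
    then show "compactin (realization Y \<Delta>) (realization Y \<Delta> closure_of W)"
      using closed_compactin[OF cQ] closedin_closure_of by blast
  qed
  show "locally_compact_space (realization Y \<Delta>)"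
    unfolding locally_compact_space_def
  proof
    fix \<mu> assume "\<mu> \<in> topspace (realization Y \<Delta>)"
    then have \<mu>: "\<mu> \<in> realization_set \<Delta>" by (simp add: topspace_realization)
    have "msupp \<mu> \<noteq> {}" using \<mu> ne realization_set_def by blast
    then obtain y0 where y0: "y0 \<in> msupp \<mu>" by blast
    have MDm: "msupp \<mu> \<in> \<Delta>" using \<mu> by (simp add: realization_set_def)
    have MY: "msupp \<mu> \<subseteq> topspace Y" using dY MDm by blast
    have y0Y: "y0 \<in> topspace Y" using y0 MY by blast
    obtain g where g: "g \<in> Cc Y" "\<forall>z\<in>topspace Y. g z \<in> {0..1}" "g y0 = 1"
      using bump[OF lcY hsY y0Y] by blast
    have "\<forall>z\<in>msupp \<mu>. g z \<ge> 0" using g(2) MY by auto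
    then have "mint \<mu> g \<ge> \<mu> y0 * g y0" using mint_ge[OF \<mu> y0] by blast
    moreover have "\<mu> y0 > 0"
    proof -
      have "\<mu> y0 \<ge> 0" using \<mu> by (simp add: realization_set_def)
      moreover have "\<mu> y0 \<noteq> 0" using y0 by (simp add: msupp_def)
      ultimately show ?thesis by linarith
    qed
    ultimately have a: "mint \<mu> g / 2 > 0" using g(3) by auto
    define U where "U = {\<nu> \<in> topspace (realization Y \<Delta>). mint \<nu> g \<in> {mint \<mu> g / 2<..}}"
    have "openin (realization Y \<Delta>) U"
      unfolding U_def by (rule openin_continuous_map_preimage[OF cont_eval[OF g(1)]]) simp
    moreover have "compactin (realization Y \<Delta>) {\<nu> \<in> realization_set \<Delta>. mint \<nu> g \<ge> mint \<mu> g / 2}"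
      by (rule Q_compact[OF sc h1 h2 g(1) a])
    moreover have "\<mu> \<in> U" using \<mu> a unfolding U_def topspace_realization by auto
    moreover have "U \<subseteq> {\<nu> \<in> realization_set \<Delta>. mint \<nu> g \<ge> mint \<mu> g / 2}"
      unfolding U_def topspace_realization by auto
    ultimately show "\<exists>U K. openin (realization Y \<Delta>) U \<and> compactin (realization Y \<Delta>) K \<and> \<mu> \<in> U \<and> U \<subseteq> K"
      by blast
  qed
qed


end
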